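(* Let $X$ be a finite connected poset of length $1$. Then $\mathcal{M}(X)=\mathcal{P}(X)$ if and only if $|\mathrm{Min}(X)|=1$ or $|\mathrm{Max}(X)|=1$.
   Context: The length of $X$ is the maximum of $|C|-1$ over chains $C\subseteq X$. $\mathrm{Min}(X)$, $\mathrm{Max}(X)$ are the sets of minimal and maximal elements. For $x<y$, $e_{xy}$ denotes the incidence-algebra basis element and $B=\{e_{xy}:x<y\}$. $\mathcal{C}(X)$ is the set of maximal chains. For a bijection $\theta:B\to B$ and $C:u_1<\dots<u_m$ in $\mathcal{C}(X)$, $\theta$ is increasing on $C$ if there is $D:v_1<\dots<v_m$ in $\mathcal{C}(X)$ with $\theta(e_{u_iu_j})=e_{v_iv_j}$ for all $i<j$, decreasing if $\theta(e_{u_iu_j})=e_{v_{m-j+1}v_{m-i+1}}$ for all $i<j$. $\mathcal{M}(X)$ is the set of bijections $B\to B$ increasing or decreasing on every maximal chain. $\theta:B\to B$ is proper if there is an automorphism $\lambda$ of $X$ with $\theta(e_{xy})=e_{\lambda(x)\lambda(y)}$ for all $x<y$, or an anti-automorphism $\lambda$ of $X$ with $\theta(e_{xy})=e_{\lambda(y)\lambda(x)}$ for all $x<y$; $\mathcal{P}(X)$ is the set of proper bijections. *)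

theory Defs
  imports Main
begin

text \<open>A finite poset is modelled as a finite carrier set X inside a type of class order,
with the induced order. Basis elements e_xy (x<y) are modelled as pairs (x,y).\<close>

definition is_chain :: "'a::order set \<Rightarrow> 'a set \<Rightarrow> bool" where
  "is_chain X C \<longleftrightarrow> C \<subseteq> X \<and> (\<forall>x\<in>C. \<forall>y\<in>C. x \<le> y \<or> y \<le> x)"

definition poset_length :: "'a::order set \<Rightarrow> nat" where
  "poset_length X = Max {card C - 1 | C. is_chain X C}"

definition poset_connected :: "'a::order set \<Rightarrow> bool" where
  "poset_connected X \<longleftrightarrow> X \<noteq> {} \<and>
     (\<forall>x\<in>X. \<forall>y\<in>X. (x, y) \<in> ({(a, b). a \<in> X \<and> b \<in> X \<and> (a \<le> b \<or> b \<le> a)})\<^sup>*)"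

definition Min_el :: "'a::order set \<Rightarrow> 'a set" where
  "Min_el X = {x \<in> X. \<not> (\<exists>y\<in>X. y < x)}"

definition Max_el :: "'a::order set \<Rightarrow> 'a set" where
  "Max_el X = {x \<in> X. \<not> (\<exists>y\<in>X. x < y)}"

definition basisB :: "'a::order set \<Rightarrow> ('a \<times> 'a) set" where
  "basisB X = {(x, y). x \<in> X \<and> y \<in> X \<and> x < y}"

definition is_max_chain :: "'a::order set \<Rightarrow> 'a set \<Rightarrow> bool" where
  "is_max_chain X C \<longleftrightarrow> is_chain X C \<and> (\<forall>C'. is_chain X C' \<and> C \<subseteq> C' \<longrightarrow> C' = C)"

definition max_chain_list :: "'a::order set \<Rightarrow> 'a list \<Rightarrow> bool" where
  "max_chain_list X us \<longleftrightarrow> sorted_wrt (<) us \<and> is_max_chain X (set us)"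

definition increasing_on :: "'a::order set \<Rightarrow> ('a \<times> 'a \<Rightarrow> 'a \<times> 'a) \<Rightarrow> 'a list \<Rightarrow> bool" where
  "increasing_on X \<theta> us \<longleftrightarrow> (\<exists>vs. max_chain_list X vs \<and> length vs = length us \<and>
     (\<forall>i j. i < j \<and> j < length us \<longrightarrow> \<theta> (us ! i, us ! j) = (vs ! i, vs ! j)))"

definition decreasing_on :: "'a::order set \<Rightarrow> ('a \<times> 'a \<Rightarrow> 'a \<times> 'a) \<Rightarrow> 'a list \<Rightarrow> bool" where
  "decreasing_on X \<theta> us \<longleftrightarrow> (\<exists>vs. max_chain_list X vs \<and> length vs = length us \<and>
     (\<forall>i j. i < j \<and> j < length us \<longrightarrow>
        \<theta> (us ! i, us ! j) = (vs ! (length us - 1 - j), vs ! (length us - 1 - i))))"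

definition M_set :: "'a::order set \<Rightarrow> ('a \<times> 'a \<Rightarrow> 'a \<times> 'a) set" where
  "M_set X = {\<theta>. bij_betw \<theta> (basisB X) (basisB X) \<and>
     (\<forall>us. max_chain_list X us \<longrightarrow> increasing_on X \<theta> us \<or> decreasing_on X \<theta> us)}"

definition is_automorphism :: "'a::order set \<Rightarrow> ('a \<Rightarrow> 'a) \<Rightarrow> bool" where
  "is_automorphism X f \<longleftrightarrow> bij_betw f X X \<and> (\<forall>x\<in>X. \<forall>y\<in>X. x \<le> y \<longleftrightarrow> f x \<le> f y)"

definition is_anti_automorphism :: "'a::order set \<Rightarrow> ('a \<Rightarrow> 'a) \<Rightarrow> bool" where
  "is_anti_automorphism X f \<longleftrightarrow> bij_betw f X X \<and> (\<forall>x\<in>X. \<forall>y\<in>X. x \<le> y \<longleftrightarrow> f y \<le> f x)"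

definition P_set :: "'a::order set \<Rightarrow> ('a \<times> 'a \<Rightarrow> 'a \<times> 'a) set" where
  "P_set X = {\<theta>. bij_betw \<theta> (basisB X) (basisB X) \<and>
     ((\<exists>f. is_automorphism X f \<and> (\<forall>(x, y)\<in>basisB X. \<theta> (x, y) = (f x, f y))) \<or>
      (\<exists>f. is_anti_automorphism X f \<and> (\<forall>(x, y)\<in>basisB X. \<theta> (x, y) = (f y, f x))))}"

end

theory Submission
  imports Defs
begin

lemma cut_lemma:
  assumes "poset_connected X" "S \<subseteq> X" "s0 \<in> S" "y \<in> X" "y \<notin> S"
  shows "\<exists>s\<in>S. \<exists>t\<in>X. t \<notin> S \<and> (s \<le> t \<or> t \<le> s)"
proof -
  have "(s0,y) \<in> ({(a, b). a \<in> X \<and> b \<in> X \<and> (a \<le> b \<or> b \<le> a)})\<^sup>*"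
    using assms unfolding poset_connected_def by blast
  then have "y \<in> S \<or> (\<exists>s\<in>S. \<exists>t\<in>X. t \<notin> S \<and> (s \<le> t \<or> t \<le> s))"
  proof (induction rule: rtrancl_induct)
    case base
    then show ?case using assms by blast
  next
    case (step y z)
    then show ?case by blast
  qed
  then show ?thesis using assms by blast
qed

lemma chain_bound:
  assumes "finite X" "poset_length X = 1" "is_chain X C"
  shows "card C \<le> 2"
proof -
  have fin: "finite {card C - 1 | C. is_chain X C}"
  proof -
    have "{card C - 1 | C. is_chain X C} \<subseteq> (\<lambda>C. card C - 1) ` Pow X"
      unfolding is_chain_def by blast
    then show ?thesis using assms(1) by (meson finite_Pow_iff finite_imageI finite_subset)
  qed
  have "card C - 1 \<le> Max {card C - 1 | C. is_chain X C}"
    using fin assms(3) by (intro Max_ge) auto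
  then show ?thesis using assms(2) unfolding poset_length_def by simp
qed

lemma edge_exists:
  assumes "finite X" "poset_length X = 1"
  shows "\<exists>a b. a \<in> X \<and> b \<in> X \<and> a < b"
proof -
  have fin: "finite {card C - 1 | C. is_chain X C}"
  proof -
    have "{card C - 1 | C. is_chain X C} \<subseteq> (\<lambda>C. card C - 1) ` Pow X"
      unfolding is_chain_def by blast
    then show ?thesis using assms(1) by (meson finite_Pow_iff finite_imageI finite_subset)
  qed
  have ne: "{card C - 1 | C. is_chain X C} \<noteq> {}"
    unfolding is_chain_def by blast
  have "Max {card C - 1 | C. is_chain X C} \<in> {card C - 1 | C. is_chain X C}"
    using fin ne by (rule Max_in)
  then obtain C where C: "is_chain X C" "card C - 1 = 1"
    using assms(2) unfolding poset_length_def by auto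
  then have "card C = 2" by simp
  then obtain a b where ab: "C = {a,b}" "a \<noteq> b" by (meson card_2_iff)
  then have "a \<in> X" "b \<in> X" "a \<le> b \<or> b \<le> a" using C(1) unfolding is_chain_def by auto
  then show ?thesis using ab(2) by (metis order.not_eq_order_implies_strict)
qed

lemma no3:
  assumes "finite X" "poset_length X = 1" "x \<in> X" "y \<in> X" "z \<in> X" "x < y" "y < z"
  shows False
proof -
  have "is_chain X {x,y,z}" using assms unfolding is_chain_def by auto
  then have "card {x,y,z} \<le> 2" using chain_bound assms by blast
  moreover have "x \<noteq> y" "y \<noteq> z" "x \<noteq> z" using assms by auto
  then have "card {x,y,z} = 3" by auto
  ultimately show False by simp
qed

lemma nonisolated:
  assumes "finite X" "poset_connected X" "poset_length X = 1" "u \<in> X"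
  shows "\<exists>t\<in>X. t \<noteq> u \<and> (u \<le> t \<or> t \<le> u)"
proof -
  obtain a b where ab: "a \<in> X" "b \<in> X" "a < b" using edge_exists assms by blast
  then obtain y where y: "y \<in> X" "y \<noteq> u" by (metis order.strict_iff_not)
  show ?thesis using cut_lemma[OF assms(2), of "{u}" u y] y assms(4) by blast
qed

lemma max_chain_pair:
  assumes "finite X" "poset_connected X" "poset_length X = 1" "max_chain_list X us"
  shows "\<exists>u v. us = [u,v] \<and> u < v \<and> u \<in> X \<and> v \<in> X"
proof -
  have sw: "sorted_wrt (<) us" and mc: "is_max_chain X (set us)"
    using assms(4) unfolding max_chain_list_def by auto
  have dist: "distinct us" using sw by (induction us) auto
  have ch: "is_chain X (set us)" using mc unfolding is_max_chain_def by blast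
  have mx: "\<And>C'. is_chain X C' \<Longrightarrow> set us \<subseteq> C' \<Longrightarrow> C' = set us"
    using mc unfolding is_max_chain_def by blast
  have "card (set us) \<le> 2" using chain_bound[OF assms(1,3) ch] .
  then have len: "length us \<le> 2" using dist by (simp add: distinct_card)
  have "us \<noteq> []"
  proof
    assume "us = []"
    obtain a b where ab: "a \<in> X" "b \<in> X" "a < b" using edge_exists assms by blast
    have "is_chain X {a}" using ab unfolding is_chain_def by auto
    then have "{a} = set us" using mx[of "{a}"] \<open>us = []\<close> by simp
    then show False using \<open>us = []\<close> by simp
  qed
  moreover have "\<not> (\<exists>u. us = [u])"
  proof
    assume "\<exists>u. us = [u]"
    then obtain u where u: "us = [u]" by blast
    then have "u \<in> X" using ch unfolding is_chain_def by auto
    then obtain t where t: "t \<in> X" "t \<noteq> u" "u \<le> t \<or> t \<le> u"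
      using nonisolated assms by blast
    have "is_chain X {u,t}" using t \<open>u \<in> X\<close> unfolding is_chain_def by auto
    then have "{u,t} = set us" using mx[of "{u,t}"] u by simp
    then show False using u t by auto
  qed
  ultimately have "\<exists>u v. us = [u,v]" using len
    by (cases us rule: remdups_adj.cases) auto
  then obtain u v where uv: "us = [u,v]" by blast
  then show ?thesis using sw ch unfolding is_chain_def by auto
qed

lemma pair_max_chain:
  assumes "finite X" "poset_length X = 1" "p \<in> X" "q \<in> X" "p < q"
  shows "max_chain_list X [p,q]"
proof -
  have ch: "is_chain X {p,q}" using assms unfolding is_chain_def by auto
  have mx: "C' = {p,q}" if "is_chain X C'" "{p,q} \<subseteq> C'" for C'
  proof -
    have "finite C'" using that assms(1) unfolding is_chain_def by (meson finite_subset)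
    moreover have "card C' \<le> 2" using chain_bound[OF assms(1,2) that(1)] .
    moreover have "card {p,q} = 2" using assms by auto
    ultimately have "{p,q} = C'" using that(2) by (intro card_seteq) auto
    then show ?thesis by simp
  qed
  have "is_max_chain X {p,q}" unfolding is_max_chain_def using ch mx by blast
  moreover have "sorted_wrt (<) [p,q]" using assms by simp
  ultimately show ?thesis unfolding max_chain_list_def by simp
qed

lemma M_char:
  assumes "finite X" "poset_connected X" "poset_length X = 1"
  shows "M_set X = {\<theta>. bij_betw \<theta> (basisB X) (basisB X)}"
proof -
  have "increasing_on X \<theta> us" if b: "bij_betw \<theta> (basisB X) (basisB X)" and m: "max_chain_list X us" for \<theta> us
  proof -
    obtain u v where uv: "us = [u,v]" "u < v" "u \<in> X" "v \<in> X"
      using max_chain_pair[OF assms m] by blast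
    have "(u,v) \<in> basisB X" using uv unfolding basisB_def by auto
    then have "\<theta> (u,v) \<in> basisB X" using b by (meson bij_betwE)
    then obtain p q where pq: "\<theta> (u,v) = (p,q)" "p \<in> X" "q \<in> X" "p < q"
      unfolding basisB_def by auto
    have "max_chain_list X [p,q]" using pair_max_chain assms pq by blast
    moreover have "\<forall>i j. i < j \<and> j < length us \<longrightarrow> \<theta> (us ! i, us ! j) = ([p,q] ! i, [p,q] ! j)"
    proof (intro allI impI)
      fix i j :: nat assume "i < j \<and> j < length us"
      then have "i = 0" "j = 1" using uv by auto
      then show "\<theta> (us ! i, us ! j) = ([p,q] ! i, [p,q] ! j)" using uv pq by simp
    qed
    ultimately show ?thesis unfolding increasing_on_def using uv by (intro exI[of _ "[p,q]"]) auto
  qed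
  then show ?thesis unfolding M_set_def by blast
qed


lemma proper_ends:
  assumes "\<theta> \<in> P_set X"
  shows "\<exists>l. inj_on l X \<and> (\<forall>e\<in>basisB X. {fst (\<theta> e), snd (\<theta> e)} = l ` {fst e, snd e})"
proof -
  have "(\<exists>f. is_automorphism X f \<and> (\<forall>(x, y)\<in>basisB X. \<theta> (x, y) = (f x, f y))) \<or>
      (\<exists>f. is_anti_automorphism X f \<and> (\<forall>(x, y)\<in>basisB X. \<theta> (x, y) = (f y, f x)))"
    using assms unfolding P_set_def by blast
  then show ?thesis
  proof
    assume "\<exists>f. is_automorphism X f \<and> (\<forall>(x, y)\<in>basisB X. \<theta> (x, y) = (f x, f y))"
    then obtain l where l: "is_automorphism X l" "\<forall>(x, y)\<in>basisB X. \<theta> (x, y) = (l x, l y)" by blast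
    have "inj_on l X" using l(1) unfolding is_automorphism_def bij_betw_def by blast
    moreover have "\<forall>e\<in>basisB X. {fst (\<theta> e), snd (\<theta> e)} = l ` {fst e, snd e}"
      using l(2) by auto
    ultimately show ?thesis by blast
  next
    assume "\<exists>f. is_anti_automorphism X f \<and> (\<forall>(x, y)\<in>basisB X. \<theta> (x, y) = (f y, f x))"
    then obtain l where l: "is_anti_automorphism X l" "\<forall>(x, y)\<in>basisB X. \<theta> (x, y) = (l y, l x)" by blast
    have "inj_on l X" using l(1) unfolding is_anti_automorphism_def bij_betw_def by blast
    moreover have "\<forall>e\<in>basisB X. {fst (\<theta> e), snd (\<theta> e)} = l ` {fst e, snd e}"
      using l(2) by auto
    ultimately show ?thesis by blast
  qed
qed

lemma not_proper:
  assumes B: "e1 \<in> basisB X" "f \<in> basisB X" "e2 \<in> basisB X"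
    and sh: "{fst e1, snd e1} \<inter> {fst f, snd f} \<noteq> {}"
    and dj: "{fst e1, snd e1} \<inter> {fst e2, snd e2} = {}"
    and ne: "e1 \<noteq> f"
  defines "\<theta> \<equiv> (\<lambda>z. if z = f then e2 else if z = e2 then f else z)"
  shows "\<theta> \<in> M_set X \<Longrightarrow> \<theta> \<notin> P_set X"
proof
  assume "\<theta> \<in> P_set X"
  then obtain l where l: "inj_on l X" "\<forall>e\<in>basisB X. {fst (\<theta> e), snd (\<theta> e)} = l ` {fst e, snd e}"
    using proper_ends by blast
  have ne2: "e1 \<noteq> e2" using dj by auto
  have t1: "\<theta> e1 = e1" using ne ne2 unfolding \<theta>_def by auto
  have t2: "\<theta> f = e2" unfolding \<theta>_def by auto
  have sub: "\<And>e. e \<in> basisB X \<Longrightarrow> {fst e, snd e} \<subseteq> X" unfolding basisB_def by auto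
  have "l ` ({fst e1, snd e1} \<inter> {fst f, snd f}) = l ` {fst e1, snd e1} \<inter> l ` {fst f, snd f}"
    using l(1) sub[OF B(1)] sub[OF B(2)] by (intro inj_on_image_Int) auto
  also have "\<dots> = {fst e1, snd e1} \<inter> {fst e2, snd e2}"
    using l(2) B t1 t2 by metis
  also have "\<dots> = {}" using dj .
  finally show False using sh by simp
qed

lemma swap_bij:
  assumes "f \<in> B" "e2 \<in> B"
  shows "bij_betw (\<lambda>z. if z = f then e2 else if z = e2 then f else z) B B"
  by (rule bij_betw_byWitness[where f'="\<lambda>z. if z = f then e2 else if z = e2 then f else z"])
     (use assms in auto)


lemma edge_of:
  assumes "p \<in> X" "q \<in> X" "p \<noteq> q" "p \<le> q \<or> q \<le> p"
  shows "\<exists>e\<in>basisB X. {fst e, snd e} = {p,q}"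
proof (cases "p \<le> q")
  case True
  then have "(p,q) \<in> basisB X" using assms unfolding basisB_def by auto
  then show ?thesis by force
next
  case False
  then have "(q,p) \<in> basisB X" using assms unfolding basisB_def by auto
  then show ?thesis by force
qed

lemma lower_min:
  assumes "finite X" "poset_length X = 1" "a \<in> X" "b \<in> X" "a < b"
  shows "a \<in> Min_el X" "b \<in> Max_el X"
  using no3[OF assms(1,2)] assms unfolding Min_el_def Max_el_def by blast+

lemma other_el:
  assumes "finite X" "a \<in> A" "A \<subseteq> X" "card A \<noteq> 1"
  shows "\<exists>a'\<in>A. a' \<noteq> a"
proof (rule ccontr)
  assume "\<not> ?thesis"
  then have "A = {a}" using assms(2) by blast
  then show False using assms(4) by simp
qed

lemma config:
  assumes fin: "finite X" and con: "poset_connected X" and len: "poset_length X = 1"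
    and cm: "card (Min_el X) \<noteq> 1" and cM: "card (Max_el X) \<noteq> 1"
  shows "\<exists>e1 f e2. e1 \<in> basisB X \<and> f \<in> basisB X \<and> e2 \<in> basisB X \<and>
     {fst e1, snd e1} \<inter> {fst f, snd f} \<noteq> {} \<and> {fst e1, snd e1} \<inter> {fst e2, snd e2} = {} \<and> e1 \<noteq> f"
proof -
  obtain a b where ab: "a \<in> X" "b \<in> X" "a < b" using edge_exists fin len by blast
  have aM: "a \<in> Min_el X" and bM: "b \<in> Max_el X" using lower_min[OF fin len ab] by auto
  obtain a' where a': "a' \<in> Min_el X" "a' \<noteq> a"
    using other_el[OF fin aM _ cm] unfolding Min_el_def by blast
  obtain b' where b': "b' \<in> Max_el X" "b' \<noteq> b"
    using other_el[OF fin bM _ cM] unfolding Max_el_def by blast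
  define S where "S = {x\<in>X. a \<le> x \<or> x \<le> a \<or> b \<le> x \<or> x \<le> b}"
  show ?thesis
  proof (cases "S = X")
    case True
    have a'X: "a' \<in> X" "\<forall>y\<in>X. \<not> y < a'" using a' unfolding Min_el_def by auto
    have b'X: "b' \<in> X" "\<forall>y\<in>X. \<not> b' < y" using b' unfolding Max_el_def by auto
    have aX: "\<forall>y\<in>X. \<not> y < a" using aM unfolding Min_el_def by auto
    have bX: "\<forall>y\<in>X. \<not> b < y" using bM unfolding Max_el_def by auto
    have "a' \<in> S" using True a'X by simp
    then have c1: "a \<le> a' \<or> a' \<le> a \<or> b \<le> a' \<or> a' \<le> b" unfolding S_def by simp
    have n1: "\<not> a < a'" "\<not> a' < a" "\<not> b < a'" "\<not> b = a'"
      using a'X aX ab by auto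
    have 1: "a' < b" using c1 n1 a'(2) by (auto simp: order.order_iff_strict)
    have "b' \<in> S" using True b'X by simp
    then have c2: "a \<le> b' \<or> b' \<le> a \<or> b \<le> b' \<or> b' \<le> b" unfolding S_def by simp
    have n2: "\<not> b < b'" "\<not> b' < b" "\<not> b' < a" "\<not> b' = a"
      using b'X bX ab by auto
    have 2: "a < b'" using c2 n2 b'(2) by (auto simp: order.order_iff_strict)
    have 3: "a' \<noteq> b'" using 2 a'X b'X ab by auto
    have "(a',b) \<in> basisB X" "(a,b) \<in> basisB X" "(a,b') \<in> basisB X"
      using 1 2 ab a'X b'X unfolding basisB_def by auto
    moreover have "{a',b} \<inter> {a,b} \<noteq> {}" by auto
    moreover have "{a',b} \<inter> {a,b'} = {}" using a'(2) b'(2) 3 ab by auto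
    moreover have "(a',b) \<noteq> (a,b)" using a'(2) by auto
    ultimately show ?thesis by (intro exI[of _ "(a',b)"] exI[of _ "(a,b)"] exI[of _ "(a,b')"]) simp
  next
    case False
    have "S \<subseteq> X" "a \<in> S" unfolding S_def using ab by auto
    then obtain y where y: "y \<in> X" "y \<notin> S" using False by blast
    obtain x t where xt: "x \<in> S" "t \<in> X" "t \<notin> S" "x \<le> t \<or> t \<le> x"
      using cut_lemma[OF con \<open>S \<subseteq> X\<close> \<open>a \<in> S\<close> y] by metis
    have xX: "x \<in> X" using xt S_def by auto
    have xa: "x \<noteq> a" "x \<noteq> b" "x \<noteq> t" using xt unfolding S_def by auto
    have ta: "t \<noteq> a" "t \<noteq> b" using xt ab unfolding S_def by auto
    obtain e2 where e2: "e2 \<in> basisB X" "{fst e2, snd e2} = {x,t}"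
      using edge_of[OF xX xt(2) xa(3) xt(4)] by metis
    have e1: "(a,b) \<in> basisB X" using ab unfolding basisB_def by auto
    obtain f where f: "f \<in> basisB X" "{fst f, snd f} = {x,a} \<or> {fst f, snd f} = {x,b}"
    proof (cases "a \<le> x \<or> x \<le> a")
      case True
      then show ?thesis using edge_of[OF xX ab(1) xa(1)] that by metis
    next
      case False
      then have "b \<le> x \<or> x \<le> b" using xt(1) unfolding S_def by auto
      then show ?thesis using edge_of[OF xX ab(2) xa(2)] that by metis
    qed
    have "a \<in> {fst f, snd f} \<or> b \<in> {fst f, snd f}" using f(2) by (elim disjE) simp_all
    then have "{fst (a,b), snd (a,b)} \<inter> {fst f, snd f} \<noteq> {}" by auto
    moreover have "{fst (a,b), snd (a,b)} \<inter> {fst e2, snd e2} = {}" using e2(2) xa ta by auto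
    moreover have "(a,b) \<noteq> f" using f(2) xa by auto
    ultimately show ?thesis using e1 f(1) e2(1)
      by (intro exI[of _ "(a,b)"] exI[of _ f] exI[of _ e2]) simp
  qed
qed


lemma star_min:
  assumes fin: "finite X" and len: "poset_length X = 1" and mm: "Min_el X = {m}"
    and bij: "bij_betw \<theta> (basisB X) (basisB X)"
  shows "\<theta> \<in> P_set X"
proof -
  have mX: "m \<in> X" using mm unfolding Min_el_def by auto
  have Bm: "\<And>x y. (x,y) \<in> basisB X \<Longrightarrow> x = m"
  proof -
    fix x y assume "(x,y) \<in> basisB X"
    then have "x \<in> Min_el X" using lower_min(1)[OF fin len] unfolding basisB_def by auto
    then show "x = m" using mm by auto
  qed
  have lt: "\<And>u v. u \<in> X \<Longrightarrow> v \<in> X \<Longrightarrow> u < v \<Longrightarrow> u = m"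
    using Bm unfolding basisB_def by auto
  have below: "\<And>x. x \<in> X \<Longrightarrow> x = m \<or> m < x"
  proof -
    fix x assume xX: "x \<in> X"
    show "x = m \<or> m < x"
    proof (cases "x \<in> Min_el X")
      case True then show ?thesis using mm by auto
    next
      case False
      then obtain c where "c \<in> X" "c < x" using xX unfolding Min_el_def by auto
      then show ?thesis using lt xX by blast
    qed
  qed
  define l where "l y = (if y = m then m else snd (\<theta> (m,y)))" for y
  have th: "\<theta> (m,y) = (m, l y) \<and> m < l y \<and> l y \<in> X" if "y \<in> X" "y \<noteq> m" for y
  proof -
    have "(m,y) \<in> basisB X" using that below mX unfolding basisB_def by auto
    then have "\<theta> (m,y) \<in> basisB X" using bij by (meson bij_betwE)
    then obtain p q where pq: "\<theta> (m,y) = (p,q)" "(p,q) \<in> basisB X" by (cases "\<theta> (m,y)") auto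
    then have "p = m" using Bm by blast
    then show ?thesis using pq that unfolding l_def basisB_def by auto
  qed
  have lm: "l m = m" unfolding l_def by simp
  have lX: "l ` X \<subseteq> X"
  proof
    fix z assume "z \<in> l ` X"
    then obtain y where "y \<in> X" "z = l y" by blast
    then show "z \<in> X" using th[of y] lm mX by (cases "y = m") auto
  qed
  have inj: "inj_on l X"
  proof (rule inj_onI)
    fix x y assume xy: "x \<in> X" "y \<in> X" "l x = l y"
    show "x = y"
    proof (cases "x = m"; cases "y = m")
      assume "x \<noteq> m" "y \<noteq> m"
      then have "\<theta> (m,x) = \<theta> (m,y)" using th xy by metis
      moreover have "(m,x) \<in> basisB X" "(m,y) \<in> basisB X"
        using xy below mX \<open>x \<noteq> m\<close> \<open>y \<noteq> m\<close> unfolding basisB_def by auto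
      ultimately show "x = y" using bij unfolding bij_betw_def inj_on_def by blast
    qed (use th xy lm in fastforce)+
  qed
  have bl: "bij_betw l X X" unfolding bij_betw_def using inj lX endo_inj_surj[OF fin lX inj] by blast
  have eq: "\<And>u v. u \<in> X \<Longrightarrow> v \<in> X \<Longrightarrow> u \<noteq> m \<Longrightarrow> v \<noteq> m \<Longrightarrow> u \<le> v \<longleftrightarrow> u = v"
    using lt by (metis order.order_iff_strict)
  have ord: "x \<le> y \<longleftrightarrow> l x \<le> l y" if "x \<in> X" "y \<in> X" for x y
  proof (cases "x = m")
    case True
    then show ?thesis using below that lX lm by (metis image_subset_iff order.order_iff_strict)
  next
    case xm: False
    show ?thesis
    proof (cases "y = m")
      case True
      then show ?thesis using below that th xm lm by (metis order.strict_iff_not)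
    next
      case False
      have "l x \<noteq> m" "l y \<noteq> m" using th that xm False by (metis less_irrefl)+
      then have "l x \<le> l y \<longleftrightarrow> l x = l y" using eq lX that by blast
      also have "\<dots> \<longleftrightarrow> x = y" using inj that unfolding inj_on_def by blast
      also have "\<dots> \<longleftrightarrow> x \<le> y" using eq that xm False by blast
      finally show ?thesis by simp
    qed
  qed
  have aut: "is_automorphism X l" unfolding is_automorphism_def using bl ord by blast
  have "\<forall>(x, y)\<in>basisB X. \<theta> (x, y) = (l x, l y)"
  proof (clarify)
    fix x y assume xy: "(x,y) \<in> basisB X"
    then have "x = m" using Bm by blast
    moreover have "y \<in> X" "y \<noteq> m" using xy \<open>x = m\<close> unfolding basisB_def by auto
    ultimately show "\<theta> (x, y) = (l x, l y)" using th lm by simp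
  qed
  then show ?thesis unfolding P_set_def using bij aut by blast
qed


lemma star_max:
  assumes fin: "finite X" and len: "poset_length X = 1" and mm: "Max_el X = {m}"
    and bij: "bij_betw \<theta> (basisB X) (basisB X)"
  shows "\<theta> \<in> P_set X"
proof -
  have mX: "m \<in> X" using mm unfolding Max_el_def by auto
  have Bm: "\<And>x y. (x,y) \<in> basisB X \<Longrightarrow> y = m"
  proof -
    fix x y assume "(x,y) \<in> basisB X"
    then have "y \<in> Max_el X" using lower_min(2)[OF fin len] unfolding basisB_def by auto
    then show "y = m" using mm by auto
  qed
  have lt: "\<And>u v. u \<in> X \<Longrightarrow> v \<in> X \<Longrightarrow> u < v \<Longrightarrow> v = m"
    using Bm unfolding basisB_def by auto
  have below: "\<And>x. x \<in> X \<Longrightarrow> x = m \<or> x < m"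
  proof -
    fix x assume xX: "x \<in> X"
    show "x = m \<or> x < m"
    proof (cases "x \<in> Max_el X")
      case True then show ?thesis using mm by auto
    next
      case False
      then obtain c where "c \<in> X" "x < c" using xX unfolding Max_el_def by auto
      then show ?thesis using lt xX by blast
    qed
  qed
  define l where "l y = (if y = m then m else fst (\<theta> (y,m)))" for y
  have th: "\<theta> (y,m) = (l y, m) \<and> l y < m \<and> l y \<in> X" if "y \<in> X" "y \<noteq> m" for y
  proof -
    have "(y,m) \<in> basisB X" using that below mX unfolding basisB_def by auto
    then have "\<theta> (y,m) \<in> basisB X" using bij by (meson bij_betwE)
    then obtain p q where pq: "\<theta> (y,m) = (p,q)" "(p,q) \<in> basisB X" by (cases "\<theta> (y,m)") auto
    then have "q = m" using Bm by blast
    then show ?thesis using pq that unfolding l_def basisB_def by auto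
  qed
  have lm: "l m = m" unfolding l_def by simp
  have lX: "l ` X \<subseteq> X"
  proof
    fix z assume "z \<in> l ` X"
    then obtain y where "y \<in> X" "z = l y" by blast
    then show "z \<in> X" using th[of y] lm mX by (cases "y = m") auto
  qed
  have inj: "inj_on l X"
  proof (rule inj_onI)
    fix x y assume xy: "x \<in> X" "y \<in> X" "l x = l y"
    show "x = y"
    proof (cases "x = m"; cases "y = m")
      assume "x \<noteq> m" "y \<noteq> m"
      then have "\<theta> (x,m) = \<theta> (y,m)" using th xy by metis
      moreover have "(x,m) \<in> basisB X" "(y,m) \<in> basisB X"
        using xy below mX \<open>x \<noteq> m\<close> \<open>y \<noteq> m\<close> unfolding basisB_def by auto
      ultimately show "x = y" using bij unfolding bij_betw_def inj_on_def by blast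
    qed (use th xy lm in fastforce)+
  qed
  have bl: "bij_betw l X X" unfolding bij_betw_def using inj lX endo_inj_surj[OF fin lX inj] by blast
  have eq: "\<And>u v. u \<in> X \<Longrightarrow> v \<in> X \<Longrightarrow> u \<noteq> m \<Longrightarrow> v \<noteq> m \<Longrightarrow> u \<le> v \<longleftrightarrow> u = v"
    using lt by (metis order.order_iff_strict)
  have ord: "x \<le> y \<longleftrightarrow> l x \<le> l y" if "x \<in> X" "y \<in> X" for x y
  proof (cases "y = m")
    case True
    then show ?thesis using below that lX lm by (metis image_subset_iff order.order_iff_strict)
  next
    case ym: False
    show ?thesis
    proof (cases "x = m")
      case True
      then show ?thesis using below that th ym lm by (metis order.strict_iff_not)
    next
      case False
      have "l x \<noteq> m" "l y \<noteq> m" using th that ym False by (metis less_irrefl)+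
      then have "l x \<le> l y \<longleftrightarrow> l x = l y" using eq lX that by blast
      also have "\<dots> \<longleftrightarrow> x = y" using inj that unfolding inj_on_def by blast
      also have "\<dots> \<longleftrightarrow> x \<le> y" using eq that ym False by blast
      finally show ?thesis by simp
    qed
  qed
  have aut: "is_automorphism X l" unfolding is_automorphism_def using bl ord by blast
  have "\<forall>(x, y)\<in>basisB X. \<theta> (x, y) = (l x, l y)"
  proof (clarify)
    fix x y assume xy: "(x,y) \<in> basisB X"
    then have "y = m" using Bm by blast
    moreover have "x \<in> X" "x \<noteq> m" using xy \<open>y = m\<close> unfolding basisB_def by auto
    ultimately show "\<theta> (x, y) = (l x, l y)" using th lm by simp
  qed
  then show ?thesis unfolding P_set_def using bij aut by blast
qed

theorem proposition4p6:
  fixes X :: "'a::order set"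
  assumes "finite X" and "poset_connected X" and "poset_length X = 1"
  shows "M_set X = P_set X \<longleftrightarrow> card (Min_el X) = 1 \<or> card (Max_el X) = 1"
proof
  assume MP: "M_set X = P_set X"
  show "card (Min_el X) = 1 \<or> card (Max_el X) = 1"
  proof (rule ccontr)
    assume "\<not> ?thesis"
    then obtain e1 f e2 where c: "e1 \<in> basisB X" "f \<in> basisB X" "e2 \<in> basisB X"
      "{fst e1, snd e1} \<inter> {fst f, snd f} \<noteq> {}" "{fst e1, snd e1} \<inter> {fst e2, snd e2} = {}" "e1 \<noteq> f"
      using config[OF assms] by blast
    define \<theta> where "\<theta> = (\<lambda>z. if z = f then e2 else if z = e2 then f else z)"
    have "\<theta> \<in> M_set X" unfolding M_char[OF assms] \<theta>_def using swap_bij[OF c(2,3)] by simp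
    moreover then have "\<theta> \<notin> P_set X" unfolding \<theta>_def by (rule not_proper[OF c])
    ultimately show False using MP by simp
  qed
next
  assume card: "card (Min_el X) = 1 \<or> card (Max_el X) = 1"
  have "\<theta> \<in> P_set X" if "bij_betw \<theta> (basisB X) (basisB X)" for \<theta>
    using card
  proof
    assume "card (Min_el X) = 1"
    then obtain m where "Min_el X = {m}" by (meson card_1_singletonE)
    then show ?thesis using star_min assms that by blast
  next
    assume "card (Max_el X) = 1"
    then obtain m where "Max_el X = {m}" by (meson card_1_singletonE)
    then show ?thesis using star_max assms that by blast
  qed
  then show "M_set X = P_set X" unfolding M_char[OF assms] P_set_def by blast
qed

end
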